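(* Every digraph $F$ is $\vec{\chi}$-maderian. More precisely, $\mathrm{mad}_{\vec{\chi}}(F)\leq 4^m(n-1)+1$, where $m=|A(F)|$ and $n=|V(F)|$.
   Context: $\vec{\chi}(D)$, the dichromatic number, is the least $k$ such that $V(D)$ can be partitioned into $k$ sets each inducing an acyclic subdigraph. A subdivision of $F$ is obtained by replacing each arc $(x,y)$ by a directed $(x,y)$-path, internally disjoint with new internal vertices. $F$ is $\vec{\chi}$-maderian if there is an integer $c$ such that every digraph $D$ with $\vec{\chi}(D)\ge c$ contains a subdivision of $F$ as a subdigraph; $\mathrm{mad}_{\vec{\chi}}(F)$ is the least such $c$. *)

theory Defs
  imports Main
begin

text \<open>A (finite) digraph is given by a finite vertex set V and an arc set A \<subseteq> V \<times> V
  with no loops; digons (opposite arcs) are allowed, parallel arcs are not.\<close>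
definition digraph :: "'a set \<Rightarrow> ('a \<times> 'a) set \<Rightarrow> bool" where
  "digraph V A \<longleftrightarrow> finite V \<and> A \<subseteq> V \<times> V \<and> (\<forall>x. (x, x) \<notin> A)"

definition acyclic_set :: "('a \<times> 'a) set \<Rightarrow> 'a set \<Rightarrow> bool" where
  "acyclic_set A S \<longleftrightarrow> acyclic (A \<inter> (S \<times> S))"

text \<open>V can be partitioned into k sets, each inducing an acyclic subdigraph
  (colour classes c^{-1}(i), i < k; empty classes allowed).\<close>
definition dicolourable :: "'a set \<Rightarrow> ('a \<times> 'a) set \<Rightarrow> nat \<Rightarrow> bool" where
  "dicolourable V A k \<longleftrightarrow>
     (\<exists>c :: 'a \<Rightarrow> nat. (\<forall>v\<in>V. c v < k) \<and>
        (\<forall>i<k. acyclic_set A {v\<in>V. c v = i}))"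

definition dichromatic_number :: "'a set \<Rightarrow> ('a \<times> 'a) set \<Rightarrow> nat" where
  "dichromatic_number V A = (LEAST k. dicolourable V A k)"

definition dipath :: "'a set \<Rightarrow> ('a \<times> 'a) set \<Rightarrow> 'a list \<Rightarrow> bool" where
  "dipath V A p \<longleftrightarrow> p \<noteq> [] \<and> distinct p \<and> set p \<subseteq> V \<and>
     (\<forall>i. Suc i < length p \<longrightarrow> (p ! i, p ! Suc i) \<in> A)"

definition interior :: "'a list \<Rightarrow> 'a set" where
  "interior p = set (butlast (tl p))"

definition contains_subdivision ::
  "'a set \<Rightarrow> ('a \<times> 'a) set \<Rightarrow> 'b set \<Rightarrow> ('b \<times> 'b) set \<Rightarrow> bool" where
  "contains_subdivision V A VF AF \<longleftrightarrow>
     (\<exists>(phi :: 'b \<Rightarrow> 'a) (P :: 'b \<times> 'b \<Rightarrow> 'a list).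
        inj_on phi VF \<and> phi ` VF \<subseteq> V \<and>
        (\<forall>e\<in>AF. dipath V A (P e) \<and> hd (P e) = phi (fst e) \<and> last (P e) = phi (snd e)
                 \<and> interior (P e) \<inter> phi ` VF = {}) \<and>
        (\<forall>e\<in>AF. \<forall>e'\<in>AF. e \<noteq> e' \<longrightarrow> interior (P e) \<inter> set (P e') = {}))"

end

theory Submission
  imports Defs
begin


lemma acyc_pot:
  fixes \<phi> :: "'a \<Rightarrow> 'b::linorder"
  assumes le: "\<And>u w. (u,w) \<in> R \<Longrightarrow> \<phi> u \<le> \<phi> w"
    and ac: "acyclic (R \<inter> {(u,w). \<phi> u = \<phi> w})"
  shows "acyclic R"
proof -
  let ?Q = "R \<inter> {(u,w). \<phi> u = \<phi> w}"
  have *: "\<phi> x < \<phi> y \<or> (\<phi> x = \<phi> y \<and> (x,y) \<in> ?Q\<^sup>+)" if "(x,y) \<in> R\<^sup>+" for x y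
    using that
  proof (induction rule: trancl_induct)
    case (base y)
    then show ?case using le[OF base] by (cases "\<phi> x = \<phi> y") auto
  next
    case (step y z)
    have "\<phi> y \<le> \<phi> z" using le[OF step(2)] .
    show ?case
    proof (cases "\<phi> y = \<phi> z")
      case True
      then have "(y,z) \<in> ?Q" using step(2) by auto
      then show ?thesis using step(3) True by (auto intro: trancl_into_trancl)
    next
      case False
      then show ?thesis using step(3) \<open>\<phi> y \<le> \<phi> z\<close> by auto
    qed
  qed
  show ?thesis unfolding acyclic_def
  proof
    fix x show "(x,x) \<notin> R\<^sup>+"
      using *[of x x] ac unfolding acyclic_def by auto
  qed
qed

lemma trancl_const:
  assumes g: "\<And>u w. (u,w) \<in> Q \<Longrightarrow> g u = g w" and "(x,y) \<in> Q\<^sup>+"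
  shows "g y = g x \<and> (x,y) \<in> (Q \<inter> {z. g z = g x} \<times> {z. g z = g x})\<^sup>+"
  using assms(2)
proof (induction rule: trancl_induct)
  case (base y)
  then show ?case using g[OF base] by auto
next
  case (step y z)
  then have "g z = g x" using g[OF step(2)] by auto
  then show ?case using step by (auto intro: trancl_into_trancl)
qed

lemma rtrancl_path:
  assumes "(u,v) \<in> E\<^sup>*"
  shows "\<exists>p. p \<noteq> [] \<and> distinct p \<and> hd p = u \<and> last p = v \<and>
           (\<forall>i. Suc i < length p \<longrightarrow> (p!i, p!Suc i) \<in> E)"
  using assms
proof (induction rule: rtrancl_induct)
  case base
  then show ?case by (intro exI[of _ "[u]"]) auto
next
  case (step y z)
  then obtain p where p: "p \<noteq> []" "distinct p" "hd p = u" "last p = y"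
    "\<forall>i. Suc i < length p \<longrightarrow> (p!i, p!Suc i) \<in> E" by blast
  show ?case
  proof (cases "z \<in> set p")
    case True
    then obtain i where i: "i < length p" "p ! i = z" by (auto simp: in_set_conv_nth)
    let ?q = "take (Suc i) p"
    have "last ?q = z" using i by (simp add: take_Suc_conv_app_nth)
    moreover have "?q \<noteq> []" using p by simp
    moreover have "hd ?q = u" using p by simp
    moreover have "distinct ?q" using p by simp
    moreover have "\<forall>j. Suc j < length ?q \<longrightarrow> (?q!j, ?q!Suc j) \<in> E" using p(5) by auto
    ultimately show ?thesis by blast
  next
    case False
    let ?q = "p @ [z]"
    have "\<forall>j. Suc j < length ?q \<longrightarrow> (?q!j, ?q!Suc j) \<in> E"
    proof (intro allI impI)
      fix j assume j: "Suc j < length ?q"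
      show "(?q!j, ?q!Suc j) \<in> E"
      proof (cases "Suc j < length p")
        case True then show ?thesis using p(5) by (simp add: nth_append)
      next
        case False
        then have "Suc j = length p" using j by simp
        then have "j = length p - 1" by simp
        then have "?q ! j = y" "?q ! Suc j = z" using p(1,4) \<open>Suc j = length p\<close>
          by (auto simp: nth_append last_conv_nth)
        then show ?thesis using step(2) by simp
      qed
    qed
    then show ?thesis using p False by (intro exI[of _ ?q]) auto
  qed
qed

lemma to_r: "(u,r) \<in> A ^^ n \<Longrightarrow> (u,r) \<in> (A \<inter> UNIV \<times> {z. \<exists>m<n. (z,r) \<in> A ^^ m})\<^sup>*"
proof (induction n arbitrary: u)
  case 0 then show ?case by simp
next
  case (Suc n)
  from relpow_Suc_D2[OF Suc.prems] obtain w where w: "(u,w) \<in> A" "(w,r) \<in> A ^^ n" by blast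
  have "(w,r) \<in> (A \<inter> UNIV \<times> {z. \<exists>m<n. (z,r) \<in> A ^^ m})\<^sup>*" by (rule Suc.IH[OF w(2)])
  moreover have "(A \<inter> UNIV \<times> {z. \<exists>m<n. (z,r) \<in> A ^^ m})\<^sup>* \<subseteq> (A \<inter> UNIV \<times> {z. \<exists>m<Suc n. (z,r) \<in> A ^^ m})\<^sup>*"
    by (rule rtrancl_mono) (blast intro: less_SucI)
  moreover have "(u,w) \<in> A \<inter> UNIV \<times> {z. \<exists>m<Suc n. (z,r) \<in> A ^^ m}" using w by auto
  ultimately show ?case by (meson converse_rtrancl_into_rtrancl subsetD)
qed

lemma from_r: "(r,v) \<in> A ^^ n \<Longrightarrow> (r,v) \<in> (A \<inter> UNIV \<times> ({z. \<exists>m<n. (r,z) \<in> A ^^ m} \<union> {v}))\<^sup>*"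
proof (induction n arbitrary: v)
  case 0 then show ?case by simp
next
  case (Suc n)
  from Suc.prems obtain w where w: "(r,w) \<in> A ^^ n" "(w,v) \<in> A" by auto
  have "(r,w) \<in> (A \<inter> UNIV \<times> ({z. \<exists>m<n. (r,z) \<in> A ^^ m} \<union> {w}))\<^sup>*" by (rule Suc.IH[OF w(1)])
  moreover have "(A \<inter> UNIV \<times> ({z. \<exists>m<n. (r,z) \<in> A ^^ m} \<union> {w}))\<^sup>* \<subseteq> (A \<inter> UNIV \<times> ({z. \<exists>m<Suc n. (r,z) \<in> A ^^ m} \<union> {v}))\<^sup>*"
    by (rule rtrancl_mono) (use w in \<open>blast intro: less_SucI lessI\<close>)
  moreover have "(w,v) \<in> A \<inter> UNIV \<times> ({z. \<exists>m<Suc n. (r,z) \<in> A ^^ m} \<union> {v})" using w by auto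
  ultimately show ?case by (meson rtrancl_into_rtrancl subsetD)
qed

lemma tl_arc:
  assumes "x \<in> set (tl p)" "\<forall>i. Suc i < length p \<longrightarrow> (p!i, p!Suc i) \<in> E"
  shows "\<exists>w. (w,x) \<in> E"
proof -
  obtain i where "i < length (tl p)" "tl p ! i = x" using assms(1) by (auto simp: in_set_conv_nth)
  then have "Suc i < length p" "p ! Suc i = x" by (auto simp: nth_tl)
  then show ?thesis using assms(2) by blast
qed

lemma set_split_interior: "p \<noteq> [] \<Longrightarrow> set p \<subseteq> {hd p, last p} \<union> interior p"
  unfolding interior_def
  by (cases p; cases "tl p" rule: rev_cases) auto

lemma interior_tl: "interior p \<subseteq> set (tl p)"
  unfolding interior_def by (meson in_set_butlastD subsetI)

lemma interior_not_last: "distinct p \<Longrightarrow> x \<in> interior p \<Longrightarrow> x \<noteq> last p"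
  unfolding interior_def
proof (cases p rule: rev_cases)
  case (snoc q a)
  assume d: "distinct p" and x: "x \<in> set (butlast (tl p))"
  show ?thesis
  proof (cases q)
    case Nil then show ?thesis using x snoc by simp
  next
    case (Cons b q')
    then have "butlast (tl p) = q'" using snoc by simp
    then show ?thesis using x d snoc Cons by auto
  qed
qed simp



definition good :: "'a set \<Rightarrow> ('a \<times> 'a) set \<Rightarrow> 'a set \<Rightarrow> bool" where
  "good V A S \<longleftrightarrow> (\<forall>u\<in>S. \<forall>w\<in>S. u \<noteq> w \<longrightarrow>
     (\<exists>p. dipath V A p \<and> hd p = u \<and> last p = w \<and> interior p \<inter> S = {}))"

lemma good_path:
  assumes AV: "A \<subseteq> V \<times> V" and u: "u \<in> V" and uw: "u \<noteq> w"
    and r: "(u,w) \<in> (A \<inter> UNIV \<times> (- S \<union> {w}))\<^sup>*"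
  shows "\<exists>p. dipath V A p \<and> hd p = u \<and> last p = w \<and> interior p \<inter> S = {}"
proof -
  obtain p where p: "p \<noteq> []" "distinct p" "hd p = u" "last p = w"
    "\<forall>i. Suc i < length p \<longrightarrow> (p!i, p!Suc i) \<in> A \<inter> UNIV \<times> (- S \<union> {w})"
    using rtrancl_path[OF r] by blast
  have tl: "x \<in> V \<and> x \<in> - S \<union> {w}" if xin: "x \<in> set (tl p)" for x
  proof -
    obtain w' where "(w',x) \<in> A \<inter> UNIV \<times> (- S \<union> {w})" using tl_arc[OF xin p(5)] by blast
    then show ?thesis using AV by auto
  qed
  have "set p \<subseteq> V"
  proof
    fix x assume "x \<in> set p"
    then have "x = hd p \<or> x \<in> set (tl p)" using p(1) by (cases p) auto
    then show "x \<in> V" using tl p(3) u by auto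
  qed
  moreover have "interior p \<inter> S = {}"
  proof -
    { fix x assume x: "x \<in> interior p" "x \<in> S"
      then have "x \<in> set (tl p)" using interior_tl[of p] by blast
      then have "x \<in> - S \<union> {w}" using tl by blast
      moreover have "x \<noteq> w" using interior_not_last[OF p(2) x(1)] p(4) by simp
      ultimately have False using x by auto }
    then show ?thesis by blast
  qed
  moreover have "\<forall>i. Suc i < length p \<longrightarrow> (p!i, p!Suc i) \<in> A" using p(5) by blast
  ultimately show ?thesis using p(1-4) unfolding dipath_def by blast
qed

lemma p1: "y mod 2 = Suc y mod 2 \<Longrightarrow> False"
  by (simp add: mod_Suc split: if_splits)

lemma a2: "(c::nat) < 2 \<Longrightarrow> b < 2 \<Longrightarrow> (c + 2 * (b + 2 * a)) div 4 = a"
proof -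
  assume "c < 2" "b < 2"
  have "(c + 2 * (b + 2 * a)) div 4 = (c + 2 * (b + 2 * a)) div 2 div 2" by (simp add: div_mult2_eq)
  also have "\<dots> = (b + 2*a) div 2" using \<open>c<2\<close> by simp
  also have "\<dots> = a" using \<open>b<2\<close> by simp
  finally show ?thesis .
qed

lemma arith4:
  assumes b: "b < 2" and c: "c < 2"
  shows "(4*a + 2*b + c) div 4 = (a::nat) \<and> ((4*a+2*b+c) div 2) mod 2 = b \<and> (4*a+2*b+c) mod 2 = c"
proof -
  have e: "4*a + 2*b + c = c + 2 * (b + 2 * a)" by simp
  have m: "(c + 2 * m) div 2 = m \<and> (c + 2 * m) mod 2 = c" for m using c by simp
  have "(c + 2 * (b + 2 * a)) div 2 = b + 2 * a" "(c + 2 * (b + 2 * a)) mod 2 = c" using m[of "b + 2 * a"] by blast+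
  moreover have "(b + 2 * a) mod 2 = b" using b by simp
  ultimately show ?thesis unfolding e using a2[OF c b] by simp
qed

lemma par_le: "x \<le> Suc y \<Longrightarrow> y mod 2 = x mod 2 \<Longrightarrow> x \<le> (y::nat)"
proof (rule ccontr)
  assume "x \<le> Suc y" "y mod 2 = x mod 2" "\<not> x \<le> y"
  then have "x = Suc y" by simp
  then show False using \<open>y mod 2 = x mod 2\<close> p1 by simp
qed

lemma key:
  assumes dg: "digraph V A"
    and H: "\<And>S. S \<subseteq> V \<Longrightarrow> good V A S \<Longrightarrow> dicolourable S A k"
  shows "dicolourable V A (4*k)"
proof -
  have fin: "finite V" and AV: "A \<subseteq> V \<times> V" using dg unfolding digraph_def by auto
  define Cm where "Cm v = {z. (v,z) \<in> A\<^sup>* \<and> (z,v) \<in> A\<^sup>*}" for v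
  define rep where "rep v = (SOME z. z \<in> Cm v)" for v
  have rep_in: "rep v \<in> Cm v" for v
    unfolding rep_def using someI[of "\<lambda>z. z \<in> Cm v" v] by (simp add: Cm_def)
  have Cm_eq: "Cm u = Cm w" if "(u,w) \<in> A\<^sup>*" "(w,u) \<in> A\<^sup>*" for u w
    using that unfolding Cm_def by (auto intro: rtrancl_trans)
  have rep_eq: "rep u = rep w" if "(u,w) \<in> A\<^sup>*" "(w,u) \<in> A\<^sup>*" for u w
    unfolding rep_def using Cm_eq[OF that] by simp
  define ii where "ii v = (LEAST n. (rep v, v) \<in> A ^^ n)" for v
  define jj where "jj v = (LEAST n. (v, rep v) \<in> A ^^ n)" for v
  have ii_in: "(rep v, v) \<in> A ^^ ii v" for v
  proof -
    have "(rep v, v) \<in> A\<^sup>*" using rep_in[of v] unfolding Cm_def by blast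
    then have "\<exists>n. (rep v, v) \<in> A ^^ n" using rtrancl_power by blast
    then show ?thesis unfolding ii_def by (rule LeastI_ex)
  qed
  have jj_in: "(v, rep v) \<in> A ^^ jj v" for v
  proof -
    have "(v, rep v) \<in> A\<^sup>*" using rep_in[of v] unfolding Cm_def by blast
    then have "\<exists>n. (v, rep v) \<in> A ^^ n" using rtrancl_power by blast
    then show ?thesis unfolding jj_def by (rule LeastI_ex)
  qed
  have ii_le: "ii v \<le> n" if "(rep v, v) \<in> A ^^ n" for v n
    unfolding ii_def using that by (rule Least_le)
  have jj_le: "jj v \<le> n" if "(v, rep v) \<in> A ^^ n" for v n
    unfolding jj_def using that by (rule Least_le)
  define cell where "cell v = {w\<in>V. rep w = rep v \<and> ii w = ii v \<and> jj w = jj v}" for v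
  have cell_good: "good V A (cell v0)" for v0
    unfolding good_def
  proof (intro ballI impI)
    fix u w assume u: "u \<in> cell v0" and w: "w \<in> cell v0" and uw: "u \<noteq> w"
    define r where "r = rep v0"
    have ru: "rep u = r" and rw: "rep w = r" using u w unfolding cell_def r_def by auto
    have "(u,r) \<in> A ^^ jj v0" using jj_in[of u] u ru unfolding cell_def by auto
    then have 1: "(u,r) \<in> (A \<inter> UNIV \<times> {z. \<exists>m<jj v0. (z,r) \<in> A ^^ m})\<^sup>*" by (rule to_r)
    have "(r,w) \<in> A ^^ ii v0" using ii_in[of w] w rw unfolding cell_def by auto
    then have 2: "(r,w) \<in> (A \<inter> UNIV \<times> ({z. \<exists>m<ii v0. (r,z) \<in> A ^^ m} \<union> {w}))\<^sup>*" by (rule from_r)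
    have s1: "{z. \<exists>m<jj v0. (z,r) \<in> A ^^ m} \<subseteq> - cell v0 \<union> {w}"
    proof
      fix z assume "z \<in> {z. \<exists>m<jj v0. (z,r) \<in> A ^^ m}"
      then obtain m where m: "m < jj v0" "(z,r) \<in> A ^^ m" by auto
      show "z \<in> - cell v0 \<union> {w}"
      proof (rule ccontr)
        assume "z \<notin> - cell v0 \<union> {w}"
        then have "z \<in> cell v0" by auto
        then have "rep z = r" "jj z = jj v0" unfolding cell_def r_def by auto
        then show False using jj_le[of z m] m by auto
      qed
    qed
    have s2: "{z. \<exists>m<ii v0. (r,z) \<in> A ^^ m} \<union> {w} \<subseteq> - cell v0 \<union> {w}"
    proof
      fix z assume "z \<in> {z. \<exists>m<ii v0. (r,z) \<in> A ^^ m} \<union> {w}"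
      then consider "z = w" | m where "m < ii v0" "(r,z) \<in> A ^^ m" by auto
      then show "z \<in> - cell v0 \<union> {w}"
      proof cases
        case 1 then show ?thesis by simp
      next
        case (2 m)
        show ?thesis
        proof (rule ccontr)
          assume "z \<notin> - cell v0 \<union> {w}"
          then have "z \<in> cell v0" by auto
          then have "rep z = r" "ii z = ii v0" unfolding cell_def r_def by auto
          then show False using ii_le[of z m] 2 by auto
        qed
      qed
    qed
    have "(u,r) \<in> (A \<inter> UNIV \<times> (- cell v0 \<union> {w}))\<^sup>*"
      using 1 by (rule rtrancl_mono[THEN subsetD, rotated]) (use s1 in auto)
    moreover have "(r,w) \<in> (A \<inter> UNIV \<times> (- cell v0 \<union> {w}))\<^sup>*"
      using 2 by (rule rtrancl_mono[THEN subsetD, rotated]) (use s2 in auto)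
    ultimately have "(u,w) \<in> (A \<inter> UNIV \<times> (- cell v0 \<union> {w}))\<^sup>*" by (rule rtrancl_trans)
    moreover have "u \<in> V" using u unfolding cell_def by auto
    ultimately show "\<exists>p. dipath V A p \<and> hd p = u \<and> last p = w \<and> interior p \<inter> cell v0 = {}"
      using good_path[OF AV _ uw] by blast
  qed
  have cell_sub: "cell v \<subseteq> V" for v unfolding cell_def by auto
  define \<kappa> where "\<kappa> S = (SOME c. (\<forall>v\<in>S. c v < k) \<and> (\<forall>i<k. acyclic_set A {v\<in>S. c v = i}))" for S
  have \<kappa>: "(\<forall>v\<in>cell x. \<kappa> (cell x) v < k) \<and> (\<forall>i<k. acyclic_set A {v\<in>cell x. \<kappa> (cell x) v = i})" for x
  proof -
    have "dicolourable (cell x) A k" using H[OF cell_sub cell_good] .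
    then obtain c where "(\<forall>v\<in>cell x. c v < k) \<and> (\<forall>i<k. acyclic_set A {v\<in>cell x. c v = i})"
      unfolding dicolourable_def by blast
    then show ?thesis unfolding \<kappa>_def
      using someI[of "\<lambda>c. (\<forall>v\<in>cell x. c v < k) \<and> (\<forall>i<k. acyclic_set A {v\<in>cell x. c v = i})" c]
      by blast
  qed
  have cell_self: "v \<in> cell v" if "v \<in> V" for v using that unfolding cell_def by auto
  define col where "col v = 4 * \<kappa> (cell v) v + 2 * (ii v mod 2) + jj v mod 2" for v
  have col_div: "col v div 4 = \<kappa> (cell v) v" "(col v div 2) mod 2 = ii v mod 2" "col v mod 2 = jj v mod 2" for v
    unfolding col_def using arith4[of "ii v mod 2" "jj v mod 2" "\<kappa> (cell v) v"] by simp_all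
  define topo where "topo v = card {z\<in>V. (z,v) \<in> A\<^sup>*}" for v
  have topo_le: "topo u \<le> topo w \<and> (topo u = topo w \<longrightarrow> (w,u) \<in> A\<^sup>*)" if uw: "(u,w) \<in> A" for u w
  proof -
    have sub: "{z\<in>V. (z,u) \<in> A\<^sup>*} \<subseteq> {z\<in>V. (z,w) \<in> A\<^sup>*}" using uw by (auto intro: rtrancl_into_rtrancl)
    have f: "finite {z\<in>V. (z,w) \<in> A\<^sup>*}" using fin by auto
    have "topo u \<le> topo w" unfolding topo_def by (rule card_mono[OF f sub])
    moreover have "(w,u) \<in> A\<^sup>*" if eq: "topo u = topo w"
    proof -
      have "{z\<in>V. (z,u) \<in> A\<^sup>*} = {z\<in>V. (z,w) \<in> A\<^sup>*}"
        using card_subset_eq[OF f sub] eq unfolding topo_def by simp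
      moreover have "w \<in> {z\<in>V. (z,w) \<in> A\<^sup>*}" using uw AV by auto
      ultimately show ?thesis by auto
    qed
    ultimately show ?thesis by blast
  qed
  have same_comp: "rep u = rep w \<and> ii w \<le> Suc (ii u) \<and> jj u \<le> Suc (jj w)"
    if uw: "(u,w) \<in> A" and wu: "(w,u) \<in> A\<^sup>*" for u w
  proof -
    have re: "rep u = rep w" using rep_eq[OF _ wu] uw by auto
    have "(rep w, w) \<in> A ^^ Suc (ii u)" using relpow_Suc_I[OF ii_in[of u] uw] re by simp
    then have "ii w \<le> Suc (ii u)" by (rule ii_le)
    moreover have "jj u \<le> Suc (jj w)"
    proof -
      have "(u, rep u) \<in> A ^^ Suc (jj w)" using relpow_Suc_I2[OF uw jj_in[of w]] re by simp
      then show ?thesis by (rule jj_le)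
    qed
    ultimately show ?thesis using re by blast
  qed
  show ?thesis unfolding dicolourable_def
  proof (intro exI[of _ col] conjI ballI allI impI)
    fix v assume "v \<in> V"
    then have "\<kappa> (cell v) v < k" using \<kappa>[of v] cell_self by blast
    then show "col v < 4 * k" unfolding col_def by simp
  next
    fix t assume t: "t < 4 * k"
    define T where "T = {v\<in>V. col v = t}"
    define R where "R = A \<inter> T \<times> T"
    define R1 where "R1 = R \<inter> {(u,w). topo u = topo w}"
    define R2 where "R2 = R1 \<inter> {(u,w). (\<lambda>v. - int (ii v)) u = (\<lambda>v. - int (ii v)) w}"
    define R3 where "R3 = R2 \<inter> {(u,w). jj u = jj w}"
    have par: "ii u mod 2 = ii w mod 2 \<and> jj u mod 2 = jj w mod 2 \<and> col u = t \<and> col w = t \<and> u \<in> V \<and> w \<in> V"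
      if "(u,w) \<in> R" for u w
      using that col_div[of u] col_div[of w] unfolding R_def T_def by auto
    have R1p: "rep u = rep w \<and> ii w \<le> ii u \<and> jj u \<le> jj w" if "(u,w) \<in> R1" for u w
    proof -
      have "(u,w) \<in> A" "topo u = topo w" using that unfolding R1_def R_def by auto
      then have "(w,u) \<in> A\<^sup>*" using topo_le by blast
      then have "rep u = rep w \<and> ii w \<le> Suc (ii u) \<and> jj u \<le> Suc (jj w)" using same_comp \<open>(u,w) \<in> A\<close> by blast
      moreover have "ii u mod 2 = ii w mod 2 \<and> jj u mod 2 = jj w mod 2" using par that unfolding R1_def by blast
      ultimately show ?thesis using par_le by metis
    qed
    have "acyclic R3"
      unfolding acyclic_def
    proof
      fix x
      show "(x,x) \<notin> R3\<^sup>+"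
      proof
        assume xx: "(x,x) \<in> R3\<^sup>+"
        have g: "cell u = cell w" if "(u,w) \<in> R3" for u w
          using that R1p[of u w] unfolding R3_def R2_def cell_def by auto
        have "(x,x) \<in> (R3 \<inter> {z. cell z = cell x} \<times> {z. cell z = cell x})\<^sup>+"
          using trancl_const[of R3 cell x x, OF g xx] by blast
        moreover have "R3 \<inter> {z. cell z = cell x} \<times> {z. cell z = cell x} \<subseteq>
            A \<inter> {v\<in>cell x. \<kappa> (cell x) v = t div 4} \<times> {v\<in>cell x. \<kappa> (cell x) v = t div 4}"
        proof
          fix p assume "p \<in> R3 \<inter> {z. cell z = cell x} \<times> {z. cell z = cell x}"
          then obtain u w where p: "p = (u,w)" "(u,w) \<in> R" "cell u = cell x" "cell w = cell x"
            unfolding R3_def R2_def R1_def by auto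
          have "col u = t" "col w = t" "u \<in> V" "w \<in> V" using par[OF p(2)] by auto
          then show "p \<in> A \<inter> {v\<in>cell x. \<kappa> (cell x) v = t div 4} \<times> {v\<in>cell x. \<kappa> (cell x) v = t div 4}"
            using p col_div(1)[of u] col_div(1)[of w] cell_self[of u] cell_self[of w]
            unfolding R_def by auto
        qed
        ultimately have cyc: "(x,x) \<in> (A \<inter> {v\<in>cell x. \<kappa> (cell x) v = t div 4} \<times> {v\<in>cell x. \<kappa> (cell x) v = t div 4})\<^sup>+"
          using trancl_mono by blast
        have "t div 4 < k" using t by simp
        then have "acyclic_set A {v\<in>cell x. \<kappa> (cell x) v = t div 4}" using \<kappa>[of x] by blast
        then show False using cyc unfolding acyclic_set_def acyclic_def by blast
      qed
    qed
    then have "acyclic R2" unfolding R3_def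
      by (intro acyc_pot[of R2 jj]) (auto simp: R2_def dest: R1p)
    then have "acyclic R1" unfolding R2_def
      by (intro acyc_pot[of R1 "\<lambda>v. - int (ii v)"]) (auto dest: R1p)
    then have "acyclic R" unfolding R1_def
      by (intro acyc_pot[of R topo]) (auto simp: R_def dest: topo_le)
    then show "acyclic_set A {v\<in>V. col v = t}" unfolding acyclic_set_def R_def T_def .
  qed
qed



lemma dic_restr: "dicolourable S (A \<inter> S \<times> S) k \<longleftrightarrow> dicolourable S A k"
proof -
  have e: "(A \<inter> S \<times> S) \<inter> {v\<in>S. P v} \<times> {v\<in>S. P v} = A \<inter> {v\<in>S. P v} \<times> {v\<in>S. P v}" for P
    by auto
  show ?thesis unfolding dicolourable_def acyclic_set_def e ..
qed

lemma dipath_mono: "dipath S (A \<inter> S \<times> S) p \<Longrightarrow> S \<subseteq> V \<Longrightarrow> dipath V A p \<and> set p \<subseteq> S"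
  by (auto simp: dipath_def)

lemma main:
  "\<forall>(VF::'b set) AF (V::'a set) A. digraph VF AF \<longrightarrow> card AF = m \<longrightarrow> digraph V A \<longrightarrow>
     \<not> dicolourable V A (4^m * (card VF - 1)) \<longrightarrow> contains_subdivision V A VF AF"
proof (induction m)
  case 0
  show ?case
  proof (intro allI impI)
    fix VF :: "'b set" and AF and V :: "'a set" and A
    assume dF: "digraph VF AF" and c: "card AF = 0" and dD: "digraph V A"
      and nc: "\<not> dicolourable V A (4^0 * (card VF - 1))"
    have finF: "finite VF" and AFs: "AF \<subseteq> VF \<times> VF" using dF unfolding digraph_def by auto
    have "finite AF" using finite_subset[OF AFs] finF by auto
    then have AF0: "AF = {}" using c by simp
    have finV: "finite V" and noloop: "\<And>x. (x,x) \<notin> A" using dD unfolding digraph_def by auto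
    have le: "card VF \<le> card V"
    proof (rule ccontr)
      assume "\<not> card VF \<le> card V"
      then have lt: "card V \<le> card VF - 1" by simp
      obtain h where h: "bij_betw h V {0..<card V}" using ex_bij_betw_finite_nat[OF finV] by blast
      have "dicolourable V A (card VF - 1)"
        unfolding dicolourable_def
      proof (intro exI[of _ h] conjI ballI allI impI)
        fix v assume "v \<in> V"
        then have "h v < card V" using h unfolding bij_betw_def by auto
        then show "h v < card VF - 1" using lt by simp
      next
        fix i assume "i < card VF - 1"
        have "A \<inter> {v\<in>V. h v = i} \<times> {v\<in>V. h v = i} = {}"
        proof (rule ccontr)
          assume "A \<inter> {v\<in>V. h v = i} \<times> {v\<in>V. h v = i} \<noteq> {}"
          then obtain a b where ab: "(a,b) \<in> A" "a \<in> V" "b \<in> V" "h a = i" "h b = i" by auto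
          then have "a = b" using h unfolding bij_betw_def inj_on_def by auto
          then show False using ab noloop by auto
        qed
        then show "acyclic_set A {v\<in>V. h v = i}" unfolding acyclic_set_def by (simp add: acyclic_def)
      qed
      then show False using nc by simp
    qed
    obtain phi where phi: "phi ` VF \<subseteq> V" "inj_on phi VF"
      using card_le_inj[OF finF finV le] by blast
    show "contains_subdivision V A VF AF"
      unfolding contains_subdivision_def using phi AF0 by blast
  qed
next
  case (Suc m)
  show ?case
  proof (intro allI impI)
    fix VF :: "'b set" and AF and V :: "'a set" and A
    assume dF: "digraph VF AF" and c: "card AF = Suc m" and dD: "digraph V A"
      and nc: "\<not> dicolourable V A (4^Suc m * (card VF - 1))"
    have finF: "finite VF" and AFs: "AF \<subseteq> VF \<times> VF" and noloopF: "\<And>x. (x,x) \<notin> AF"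
      using dF unfolding digraph_def by auto
    have finV: "finite V" and AV: "A \<subseteq> V \<times> V" using dD unfolding digraph_def by auto
    have "finite AF" using finite_subset[OF AFs] finF by auto
    have "AF \<noteq> {}" using c by auto
    then obtain x y where e0: "(x,y) \<in> AF" by auto
    have xy: "x \<in> VF" "y \<in> VF" "x \<noteq> y" using e0 AFs noloopF by auto
    define AF' where "AF' = AF - {(x,y)}"
    have cAF': "card AF' = m" unfolding AF'_def using c e0 \<open>finite AF\<close> by simp
    have dF': "digraph VF AF'" using dF unfolding digraph_def AF'_def by auto
    define k where "k = 4^m * (card VF - 1)"
    have e4: "4^Suc m * (card VF - 1) = 4 * k" unfolding k_def by simp
    have nc4: "\<not> dicolourable V A (4 * k)" using nc unfolding e4 .
    have "\<exists>S. S \<subseteq> V \<and> good V A S \<and> \<not> dicolourable S A k"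
    proof (rule ccontr)
      assume "\<not> (\<exists>S. S \<subseteq> V \<and> good V A S \<and> \<not> dicolourable S A k)"
      then have "\<And>S. S \<subseteq> V \<Longrightarrow> good V A S \<Longrightarrow> dicolourable S A k" by blast
      then have "dicolourable V A (4 * k)" by (rule key[OF dD])
      then show False using nc4 by simp
    qed
    then obtain S where S: "S \<subseteq> V" "good V A S" "\<not> dicolourable S A k" by blast
    have dS: "digraph S (A \<inter> S \<times> S)" using dD S(1) finite_subset unfolding digraph_def by auto
    have ncS: "\<not> dicolourable S (A \<inter> S \<times> S) (4^m * (card VF - 1))"
      using S(3) dic_restr unfolding k_def by blast
    have "contains_subdivision S (A \<inter> S \<times> S) VF AF'"
      using Suc.IH[rule_format, OF dF' cAF' dS ncS] .
    then obtain phi P where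
      inj: "inj_on phi VF" and phiS: "phi ` VF \<subseteq> S" and
      paths: "\<forall>e\<in>AF'. dipath S (A \<inter> S \<times> S) (P e) \<and> hd (P e) = phi (fst e) \<and> last (P e) = phi (snd e)
                 \<and> interior (P e) \<inter> phi ` VF = {}" and
      disj: "\<forall>e\<in>AF'. \<forall>e'\<in>AF'. e \<noteq> e' \<longrightarrow> interior (P e) \<inter> set (P e') = {}"
      unfolding contains_subdivision_def by (elim exE conjE) blast
    have "phi x \<noteq> phi y" using inj xy unfolding inj_on_def by blast
    moreover have "phi x \<in> S" "phi y \<in> S" using phiS xy by auto
    ultimately obtain Q where Q: "dipath V A Q" "hd Q = phi x" "last Q = phi y" "interior Q \<inter> S = {}"
      using S(2) unfolding good_def by blast
    have Qne: "Q \<noteq> []" using Q(1) unfolding dipath_def by auto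
    have setQ: "set Q \<inter> S \<subseteq> phi ` VF"
      using set_split_interior[OF Qne] Q(2-4) xy by auto
    define P' where "P' = P((x,y) := Q)"
    have pe: "dipath V A (P e) \<and> set (P e) \<subseteq> S \<and> hd (P e) = phi (fst e) \<and> last (P e) = phi (snd e)
                 \<and> interior (P e) \<inter> phi ` VF = {}" if "e \<in> AF'" for e
      using paths that dipath_mono[OF _ S(1)] by blast
    have intS: "interior (P e) \<subseteq> S" if "e \<in> AF'" for e
    proof -
      have "P e \<noteq> []" using pe[OF that] unfolding dipath_def by auto
      have "interior (P e) \<subseteq> set (P e)" unfolding interior_def
        by (meson in_set_butlastD list.set_sel(2) subsetI \<open>P e \<noteq> []\<close>)
      then show ?thesis using pe[OF that] by blast
    qed
    show "contains_subdivision V A VF AF"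
      unfolding contains_subdivision_def
    proof (rule exI[of _ phi], rule exI[of _ P'], intro conjI)
      show "inj_on phi VF" by (rule inj)
      show "phi ` VF \<subseteq> V" using phiS S(1) by auto
    next
      show "\<forall>e\<in>AF. dipath V A (P' e) \<and> hd (P' e) = phi (fst e) \<and> last (P' e) = phi (snd e)
                 \<and> interior (P' e) \<inter> phi ` VF = {}"
      proof
      fix e assume e: "e \<in> AF"
      show "dipath V A (P' e) \<and> hd (P' e) = phi (fst e) \<and> last (P' e) = phi (snd e)
                 \<and> interior (P' e) \<inter> phi ` VF = {}"
      proof (cases "e = (x,y)")
        case True
        then show ?thesis using Q phiS unfolding P'_def by auto
      next
        case False
        then have "e \<in> AF'" using e unfolding AF'_def by auto
        then show ?thesis using pe False unfolding P'_def by auto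
      qed
      qed
    next
      show "\<forall>e\<in>AF. \<forall>e'\<in>AF. e \<noteq> e' \<longrightarrow> interior (P' e) \<inter> set (P' e') = {}"
      proof (intro ballI impI)
      fix e e' assume e: "e \<in> AF" and e': "e' \<in> AF" and ne: "e \<noteq> e'"
      show "interior (P' e) \<inter> set (P' e') = {}"
      proof (cases "e = (x,y)")
        case True
        then have "e' \<in> AF'" using ne e' unfolding AF'_def by auto
        then show ?thesis using True pe[of e'] Q(4) ne unfolding P'_def by auto
      next
        case False
        then have eA: "e \<in> AF'" using e unfolding AF'_def by auto
        show ?thesis
        proof (cases "e' = (x,y)")
          case True
          have "interior (P e) \<inter> set Q = {}"
            using intS[OF eA] setQ pe[OF eA] by blast
          then show ?thesis using True False unfolding P'_def by auto
        next
          case False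
          then have "e' \<in> AF'" using e' unfolding AF'_def by auto
          then show ?thesis using disj eA ne \<open>e \<noteq> (x,y)\<close> False unfolding P'_def by auto
        qed
      qed
    qed
    qed
  qed
qed

theorem theorem32:
  fixes VF :: "'b set" and AF :: "('b \<times> 'b) set"
    and V :: "'a set" and A :: "('a \<times> 'a) set"
  assumes "digraph VF AF"
    and "digraph V A"
    and "dichromatic_number V A \<ge> 4 ^ card AF * (card VF - 1) + 1"
  shows "contains_subdivision V A VF AF"
proof -
  have "\<not> dicolourable V A (4 ^ card AF * (card VF - 1))"
  proof
    assume "dicolourable V A (4 ^ card AF * (card VF - 1))"
    then have "dichromatic_number V A \<le> 4 ^ card AF * (card VF - 1)"
      unfolding dichromatic_number_def by (rule Least_le)
    then show False using assms(3) by simp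
  qed
  then show ?thesis using main assms(1,2) by blast
qed

end
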